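(* The number $r(\eta,S)$ of visits to the root $\emptyset$ (over all time, by all frogs) in the frog model $(\eta,S)$ is a continuous icv statistic and a continuous pgf statistic.
   Context: Frog model: $G$ is a countable set of vertices with a distinguished root $\emptyset$. A frog model $(\eta,S)$ consists of counts $\eta(v)\in\{0,1,2,\dots\}$ for $v\neq\emptyset$ and paths $S_\cdot(v,i)=(S_j(v,i))_{j\geq0}$ in $G$ with $S_0(v,i)=v$ (including a path for the single frog at the root). Initially one active frog sits at $\emptyset$ and $\eta(v)$ sleeping frogs sit at each $v\neq\emptyset$; the $i$-th frog at $v$, from its activation time on, follows $S_\cdot(v,i)$ in discrete time; when an active frog visits a vertex with sleeping frogs, all of them activate. For a path $P_\cdot$ starting at a nonroot vertex, $\sigma_{P_\cdot}(\eta,S)$ is the model with one extra frog of path $P_\cdot$ added at $P_0$. For a statistic $f$ with values in $[0,\infty]$, $\Delta_{P_\cdot}f(\eta,S)=f(\sigma_{P_\cdot}(\eta,S))-f(\eta,S)$. $f$ is an icv statistic if for all $(\eta,S)$ and all paths $P^1_\cdot,\dots,P^m_\cdot$ starting at a common vertex: (i) for $m=1,2$, $(-1)^m\Delta_{P^1_\cdot}\cdots\Delta_{P^m_\cdot}f(\eta,S)\le0$ whenever all values $f(\sigma_{P^{u_1}_\cdot}\cdots\sigma_{P^{u_j}_\cdot}(\eta,S))$, $\{u_1,\dots,u_j\}\subseteq\{1,\dots,m\}$, are finite; (ii) $f(\eta,S)=\infty$ implies $f(\sigma_{P^1_\cdot}(\eta,S))=\infty$; (iii) $f(\sigma_{P^1_\cdot}\sigma_{P^2_\cdot}(\eta,S))=\infty$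 implies $f(\sigma_{P^i_\cdot}(\eta,S))=\infty$ for $i=1$ or $2$. $f$ is a pgf statistic if (ii),(iii) hold and (i) holds for all $m\ge1$. $f$ is continuous if $\eta_k(v)\nearrow\eta(v)$ for all $v$ implies $f(\eta_k,S)\nearrow f(\eta,S)$. *)

theory Defs
  imports "HOL-Analysis.Analysis"
begin

text \<open>A frog model on a countable vertex type with rt \<open>rt\<close>:
  \<open>eta v\<close> sleeping frogs at each non-rt vertex v (the value \<open>eta rt\<close> is ignored),
  and \<open>S v i\<close> is the path (a function from time to vertices) of the i-th frog at v
  (frogs at v are indexed 0..eta v - 1); \<open>S rt 0\<close> is the path of the initially active
  frog at the rt.  Only the entries with i < eta v (and (rt,0)) are relevant.\<close>

type_synonym 'v paths = "'v \<Rightarrow> nat \<Rightarrow> nat \<Rightarrow> 'v"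
type_synonym 'v frog_model = "('v \<Rightarrow> nat) \<times> 'v paths"

definition valid_model :: "'v frog_model \<Rightarrow> bool" where
  "valid_model x \<longleftrightarrow> (\<forall>v i. snd x v i 0 = v)"

definition add_frog :: "(nat \<Rightarrow> 'v) \<Rightarrow> 'v frog_model \<Rightarrow> 'v frog_model" where
  "add_frog P x = (case x of (eta, S) \<Rightarrow>
     (eta(P 0 := Suc (eta (P 0))), S(P 0 := (S (P 0))(eta (P 0) := P))))"

text \<open>\<open>reached rt eta S w t\<close>: vertex w is occupied at time t by some frog, when the frogs
  at a vertex v are (re)started at any time at which v is occupied.  The least such t is
  exactly the activation time of w in the frog model (restarts only produce later visits).\<close>
inductive reached :: "'v \<Rightarrow> ('v \<Rightarrow> nat) \<Rightarrow> 'v paths \<Rightarrow> 'v \<Rightarrow> nat \<Rightarrow> bool"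
  for rt eta S where
  root_frog: "reached rt eta S (S rt 0 j) j"
| woken: "reached rt eta S v t \<Longrightarrow> v \<noteq> rt \<Longrightarrow> i < eta v \<Longrightarrow>
          reached rt eta S (S v i j) (t + j)"

definition activated :: "'v \<Rightarrow> ('v \<Rightarrow> nat) \<Rightarrow> 'v paths \<Rightarrow> 'v \<Rightarrow> bool" where
  "activated rt eta S v \<longleftrightarrow> (\<exists>t. reached rt eta S v t)"

definition active_frogs :: "'v \<Rightarrow> ('v \<Rightarrow> nat) \<Rightarrow> 'v paths \<Rightarrow> ('v \<times> nat) set" where
  "active_frogs rt eta S =
     insert (rt, 0) {(v, i). v \<noteq> rt \<and> activated rt eta S v \<and> i < eta v}"

definition visit_count :: "'v \<Rightarrow> (nat \<Rightarrow> 'v) \<Rightarrow> ennreal" where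
  "visit_count rt p =
     (if finite {j. p j = rt} then of_nat (card {j. p j = rt}) else \<infinity>)"

text \<open>r(eta,S): total number of visits to the rt by all frogs over all time.
  An activated frog at v follows S v i from its activation time on, so it visits the rt
  exactly as often as its path does.\<close>
definition root_visits :: "'v \<Rightarrow> 'v frog_model \<Rightarrow> ennreal" where
  "root_visits rt x = (case x of (eta, S) \<Rightarrow>
     (\<Sum>\<^sub>\<infinity>(v, i)\<in>active_frogs rt eta S. visit_count rt (S v i)))"

primrec iter_delta :: "(nat \<Rightarrow> 'v) list \<Rightarrow> ('v frog_model \<Rightarrow> real) \<Rightarrow> 'v frog_model \<Rightarrow> real" where
  "iter_delta [] g x = g x"
| "iter_delta (P # Ps) g x = iter_delta Ps g (add_frog P x) - iter_delta Ps g x"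

primrec all_finite :: "(nat \<Rightarrow> 'v) list \<Rightarrow> ('v frog_model \<Rightarrow> ennreal) \<Rightarrow> 'v frog_model \<Rightarrow> bool" where
  "all_finite [] f x = (f x \<noteq> \<infinity>)"
| "all_finite (P # Ps) f x = (all_finite Ps f (add_frog P x) \<and> all_finite Ps f x)"

definition common_start :: "'v \<Rightarrow> (nat \<Rightarrow> 'v) list \<Rightarrow> bool" where
  "common_start rt Ps \<longleftrightarrow> (\<exists>v. v \<noteq> rt \<and> (\<forall>P\<in>set Ps. P 0 = v))"

definition sign_cond :: "'v \<Rightarrow> ('v frog_model \<Rightarrow> ennreal) \<Rightarrow> nat \<Rightarrow> bool" where
  "sign_cond rt f m \<longleftrightarrow> (\<forall>x Ps. valid_model x \<longrightarrow> length Ps = m \<longrightarrow> common_start rt Ps \<longrightarrow>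
      all_finite Ps f x \<longrightarrow> (-1) ^ m * iter_delta Ps (\<lambda>y. enn2real (f y)) x \<le> 0)"

definition inf_cond_ii :: "'v \<Rightarrow> ('v frog_model \<Rightarrow> ennreal) \<Rightarrow> bool" where
  "inf_cond_ii rt f \<longleftrightarrow> (\<forall>x P. valid_model x \<longrightarrow> P 0 \<noteq> rt \<longrightarrow>
      f x = \<infinity> \<longrightarrow> f (add_frog P x) = \<infinity>)"

definition inf_cond_iii :: "'v \<Rightarrow> ('v frog_model \<Rightarrow> ennreal) \<Rightarrow> bool" where
  "inf_cond_iii rt f \<longleftrightarrow> (\<forall>x P1 P2. valid_model x \<longrightarrow> P1 0 \<noteq> rt \<longrightarrow> P2 0 = P1 0 \<longrightarrow>
      f (add_frog P1 (add_frog P2 x)) = \<infinity> \<longrightarrow>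
      f (add_frog P1 x) = \<infinity> \<or> f (add_frog P2 x) = \<infinity>)"

definition icv_statistic :: "'v \<Rightarrow> ('v frog_model \<Rightarrow> ennreal) \<Rightarrow> bool" where
  "icv_statistic rt f \<longleftrightarrow> sign_cond rt f 1 \<and> sign_cond rt f 2 \<and>
     inf_cond_ii rt f \<and> inf_cond_iii rt f"

definition pgf_statistic :: "'v \<Rightarrow> ('v frog_model \<Rightarrow> ennreal) \<Rightarrow> bool" where
  "pgf_statistic rt f \<longleftrightarrow> (\<forall>m\<ge>1. sign_cond rt f m) \<and>
     inf_cond_ii rt f \<and> inf_cond_iii rt f"

definition continuous_statistic :: "('v frog_model \<Rightarrow> ennreal) \<Rightarrow> bool" where
  "continuous_statistic f \<longleftrightarrow> (\<forall>eta S etas. valid_model (eta, S) \<longrightarrow>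
     (\<forall>v. incseq (\<lambda>k. etas k v) \<and> (\<lambda>k. etas k v) \<longlonglongrightarrow> eta v) \<longrightarrow>
     incseq (\<lambda>k. f (etas k, S)) \<and> (\<lambda>k. f (etas k, S)) \<longlonglongrightarrow> f (eta, S))"

end

theory Submission
  imports Defs
begin


lemma ens: "(f :: 'a \<Rightarrow> ennreal) summable_on A"
  by (rule nonneg_summable_on_complete) simp

lemma ens_Un: "A \<inter> B = {} \<Longrightarrow> infsum (f :: 'a \<Rightarrow> ennreal) (A \<union> B) = infsum f A + infsum f B"
  by (rule infsum_Un_disjoint[OF ens ens])

lemma ens_mono: "A \<subseteq> B \<Longrightarrow> infsum (f :: 'a \<Rightarrow> ennreal) A \<le> infsum f B"
  by (rule infsum_mono_neutral[OF ens ens]) auto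

lemma ens_sub: "infsum (f :: 'a \<Rightarrow> ennreal) (A \<union> B) \<le> infsum f A + infsum f B"
proof -
  have "A \<union> B = A \<union> (B - A)" by auto
  hence "infsum f (A \<union> B) = infsum f A + infsum f (B - A)" using ens_Un[of A "B - A" f] by auto
  also have "\<dots> \<le> infsum f A + infsum f B" using ens_mono[of "B - A" B f] by (auto intro: add_left_mono)
  finally show ?thesis .
qed

primrec iterF :: "'p list \<Rightarrow> ('p list \<Rightarrow> real) \<Rightarrow> real" where
  "iterF [] \<phi> = \<phi> []"
| "iterF (P # Ps) \<phi> = iterF Ps (\<lambda>R. \<phi> (R @ [P])) - iterF Ps \<phi>"

lemma iterF_add: "iterF Ps (\<lambda>R. \<phi> R + \<psi> R) = iterF Ps \<phi> + iterF Ps \<psi>"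
  by (induction Ps arbitrary: \<phi> \<psi>) auto

lemma iterF_diff: "iterF Ps (\<lambda>R. \<phi> R - \<psi> R) = iterF Ps \<phi> - iterF Ps \<psi>"
  by (induction Ps arbitrary: \<phi> \<psi>) auto

lemma iterF_const: "Ps \<noteq> [] \<Longrightarrow> iterF Ps (\<lambda>R. c) = 0"
  by (cases Ps) auto

lemma iterF_cong: "(\<And>R. set R \<subseteq> set Ps \<Longrightarrow> \<phi> R = \<psi> R) \<Longrightarrow> iterF Ps \<phi> = iterF Ps \<psi>"
proof (induction Ps arbitrary: \<phi> \<psi>)
  case Nil then show ?case by simp
next
  case (Cons P Ps)
  have "iterF Ps (\<lambda>R. \<phi> (R @ [P])) = iterF Ps (\<lambda>R. \<psi> (R @ [P]))"
    by (rule Cons.IH, rule Cons.prems) auto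
  moreover have "iterF Ps \<phi> = iterF Ps \<psi>"
    by (rule Cons.IH, rule Cons.prems) auto
  ultimately show ?case by simp
qed

lemma iterF_sumlist:
  assumes "\<And>P. c P \<ge> (0::real)" "Ps \<noteq> []"
  shows "(-1) ^ length Ps * iterF Ps (\<lambda>R. sum_list (map c R)) \<le> 0"
proof (cases Ps)
  case Nil then show ?thesis using assms by simp
next
  case (Cons P Qs)
  show ?thesis
  proof (cases "Qs = []")
    case True then show ?thesis using Cons assms by simp
  next
    case False
    have "iterF Qs (\<lambda>R. sum_list (map c (R @ [P]))) = iterF Qs (\<lambda>R. sum_list (map c R) + c P)"
      by simp
    also have "\<dots> = iterF Qs (\<lambda>R. sum_list (map c R))"
      using iterF_add[of Qs "\<lambda>R. sum_list (map c R)" "\<lambda>R. c P"] iterF_const[OF False] by simp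
    finally show ?thesis using Cons by simp
  qed
qed

lemma cover:
  fixes \<omega> :: "'a \<Rightarrow> ennreal" and B :: "'p \<Rightarrow> 'a set"
  assumes "infsum \<omega> E \<noteq> \<infinity>" "Ps \<noteq> []"
  shows "(-1) ^ length Ps * iterF Ps (\<lambda>R. enn2real (infsum \<omega> ((A \<union> \<Union>(B ` set R)) \<inter> E))) \<le> 0"
  using assms
proof (induction Ps arbitrary: A E)
  case Nil then show ?case by simp
next
  case (Cons P Ps)
  define U where "U R = A \<union> \<Union>(B ` set R)" for R
  define E' where "E' = (B P - A) \<inter> E"
  have fin: "infsum \<omega> X \<noteq> \<infinity>" if "X \<subseteq> E" for X
    using ens_mono[OF that, of \<omega>] Cons.prems(1) by (auto simp: top_unique)
  have key: "enn2real (infsum \<omega> (U (R @ [P]) \<inter> E)) = enn2real (infsum \<omega> (U R \<inter> E))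
      + enn2real (infsum \<omega> E') - enn2real (infsum \<omega> (U R \<inter> E'))" for R
  proof -
    have s1: "U (R @ [P]) \<inter> E = (U R \<inter> E) \<union> (E' - U R)" unfolding U_def E'_def by auto
    have s2: "E' = (U R \<inter> E') \<union> (E' - U R)" by auto
    have e1: "infsum \<omega> (U (R @ [P]) \<inter> E) = infsum \<omega> (U R \<inter> E) + infsum \<omega> (E' - U R)"
      unfolding s1 by (rule ens_Un) auto
    have e2: "infsum \<omega> E' = infsum \<omega> (U R \<inter> E') + infsum \<omega> (E' - U R)"
      by (subst s2, rule ens_Un) auto
    have f1: "infsum \<omega> (U R \<inter> E) \<noteq> \<infinity>" by (rule fin) auto
    have f2: "infsum \<omega> (E' - U R) \<noteq> \<infinity>" by (rule fin) (auto simp: E'_def)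
    have f3: "infsum \<omega> (U R \<inter> E') \<noteq> \<infinity>" by (rule fin) (auto simp: E'_def)
    show ?thesis using e1 e2 f1 f2 f3 by (simp add: enn2real_plus top.not_eq_extremum)
  qed
  show ?case
  proof (cases "Ps = []")
    case True
    have "infsum \<omega> (U [] \<inter> E) \<le> infsum \<omega> (U [P] \<inter> E)"
      by (rule ens_mono) (auto simp: U_def)
    moreover have "infsum \<omega> (U [P] \<inter> E) \<noteq> \<infinity>" by (rule fin) auto
    ultimately have "enn2real (infsum \<omega> (U [] \<inter> E)) \<le> enn2real (infsum \<omega> (U [P] \<inter> E))"
      by (simp add: enn2real_mono top.not_eq_extremum)
    then show ?thesis using True by (simp add: U_def)
  next
    case False
    have IH: "(-1) ^ length Ps * iterF Ps (\<lambda>R. enn2real (infsum \<omega> ((A \<union> \<Union>(B ` set R)) \<inter> E'))) \<le> 0"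
      by (rule Cons.IH[OF _ False]) (rule fin, auto simp: E'_def)
    have "iterF Ps (\<lambda>R. enn2real (infsum \<omega> (U (R @ [P]) \<inter> E))) =
          iterF Ps (\<lambda>R. enn2real (infsum \<omega> (U R \<inter> E)) + enn2real (infsum \<omega> E'))
          - iterF Ps (\<lambda>R. enn2real (infsum \<omega> (U R \<inter> E')))"
      unfolding key by (rule iterF_diff)
    also have "iterF Ps (\<lambda>R. enn2real (infsum \<omega> (U R \<inter> E)) + enn2real (infsum \<omega> E'))
        = iterF Ps (\<lambda>R. enn2real (infsum \<omega> (U R \<inter> E)))"
      using iterF_add[of Ps "\<lambda>R. enn2real (infsum \<omega> (U R \<inter> E))" "\<lambda>R. enn2real (infsum \<omega> E')"]
        iterF_const[OF False] by simp
    finally have "iterF (P # Ps) (\<lambda>R. enn2real (infsum \<omega> (U R \<inter> E)))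
       = - iterF Ps (\<lambda>R. enn2real (infsum \<omega> (U R \<inter> E')))" by simp
    then show ?thesis using IH by (simp add: U_def)
  qed
qed




definition addl :: "(nat \<Rightarrow> 'v) list \<Rightarrow> 'v frog_model \<Rightarrow> 'v frog_model" where
  "addl Qs x = foldr add_frog Qs x"

lemma addl_simps[simp]: "addl [] x = x" "addl (Q # Qs) x = add_frog Q (addl Qs x)"
  "addl (R @ [P]) x = addl R (add_frog P x)"
  by (auto simp: addl_def)

lemma iter_delta_iterF: "iter_delta Ps g x = iterF Ps (\<lambda>R. g (addl R x))"
  by (induction Ps arbitrary: x) auto

lemma all_finite_full: "all_finite Ps f x \<Longrightarrow> f (addl (rev Ps) x) \<noteq> \<infinity>"
  by (induction Ps arbitrary: x) auto

definition eS :: "'v \<Rightarrow> ('v \<Rightarrow> nat) \<Rightarrow> 'v paths \<Rightarrow> (nat \<Rightarrow> 'v) list \<Rightarrow> 'v paths" where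
  "eS v eta S R = (\<lambda>w i. if w = v \<and> eta v \<le> i \<and> i < eta v + length R then rev R ! (i - eta v) else S w i)"

lemma addl_eq: "(\<forall>Q\<in>set R. Q 0 = v) \<Longrightarrow> addl R (eta, S) = (eta(v := eta v + length R), eS v eta S R)"
proof (induction R)
  case Nil then show ?case by (auto simp: eS_def fun_eq_iff)
next
  case (Cons Q R)
  then have IH: "addl R (eta, S) = (eta(v := eta v + length R), eS v eta S R)" and Q: "Q 0 = v" by auto
  have e: "eS v eta S (Q#R) = (eS v eta S R)(v := (eS v eta S R v)(eta v + length R := Q))"
  proof (rule ext, rule ext)
    fix w i
    show "eS v eta S (Q#R) w i = ((eS v eta S R)(v := (eS v eta S R v)(eta v + length R := Q))) w i" (is "?l = ?r")
    proof (cases "w = v \<and> eta v \<le> i \<and> i < eta v + length R")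
      case True then show "?l = ?r" by (auto simp: eS_def nth_append)
    next
      case False
      show ?thesis
      proof (cases "w = v \<and> i = eta v + length R")
        case True then show "?l = ?r" by (auto simp: eS_def nth_append)
      next
        case False2: False
        then show "?l = ?r" using False by (auto simp: eS_def nth_append)
      qed
    qed
  qed
  show ?case
    by (simp add: IH add_frog_def Q e fun_eq_iff)
qed

lemma reached_dom:
  assumes "reached rt eta S w t" "S' rt 0 = S rt 0"
    "\<And>w i. w \<noteq> rt \<Longrightarrow> i < eta w \<Longrightarrow> \<exists>i'<eta' w. S' w i' = S w i"
  shows "reached rt eta' S' w t"
  using assms(1)
proof (induction rule: reached.induct)
  case (root_frog j)
  then show ?case using reached.root_frog[of rt eta' S' j] assms(2) by simp
next
  case (woken v t i j)
  then obtain i' where "i' < eta' v" "S' v i' = S v i" using assms(3) by blast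
  then show ?case using reached.woken[OF woken.IH woken.hyps(2), of i' j] by simp
qed




definition Bq :: "'v \<Rightarrow> 'v \<Rightarrow> ('v \<Rightarrow> nat) \<Rightarrow> 'v paths \<Rightarrow> (nat \<Rightarrow> 'v) \<Rightarrow> 'v \<Rightarrow> bool" where
  "Bq rt v eta S Q = activated rt (eta(v := eta v + 1)) (eS v eta S [Q])"

lemma dom_old:
  assumes "reached rt eta S w t" "v \<noteq> rt"
  shows "reached rt (eta(v := eta v + length R)) (eS v eta S R) w t"
proof (rule reached_dom[OF assms(1)])
  show "eS v eta S R rt 0 = S rt 0" using assms(2) by (simp add: eS_def)
next
  fix w i assume "w \<noteq> rt" "i < eta w"
  then show "\<exists>i'<(eta(v := eta v + length R)) w. eS v eta S R w i' = S w i"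
    by (intro exI[of _ i]) (auto simp: eS_def)
qed

lemma act_no:
  assumes "\<not> activated rt eta S v" "v \<noteq> rt"
  shows "activated rt (eta(v := eta v + length R)) (eS v eta S R) w = activated rt eta S w"
proof
  assume "activated rt (eta(v := eta v + length R)) (eS v eta S R) w"
  then obtain t where "reached rt (eta(v := eta v + length R)) (eS v eta S R) w t"
    unfolding activated_def by blast
  then have "reached rt eta S w t"
  proof (induction rule: reached.induct)
    case (root_frog j)
    then show ?case using reached.root_frog[of rt eta S j] assms(2) by (simp add: eS_def)
  next
    case (woken w' t i j)
    have "w' \<noteq> v" using woken.IH assms(1) unfolding activated_def by blast
    then show ?case using reached.woken[OF woken.IH woken.hyps(2), of i j] woken.hyps(3)
      by (simp add: eS_def)
  qed
  then show "activated rt eta S w" unfolding activated_def by blast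
next
  assume "activated rt eta S w"
  then show "activated rt (eta(v := eta v + length R)) (eS v eta S R) w"
    unfolding activated_def using dom_old[OF _ assms(2)] by blast
qed

lemma act_yes:
  assumes "activated rt eta S v" "v \<noteq> rt"
  shows "activated rt (eta(v := eta v + length R)) (eS v eta S R) w \<longleftrightarrow>
     activated rt eta S w \<or> (\<exists>Q\<in>set R. Bq rt v eta S Q w)"
proof
  assume "activated rt (eta(v := eta v + length R)) (eS v eta S R) w"
  then obtain t where "reached rt (eta(v := eta v + length R)) (eS v eta S R) w t"
    unfolding activated_def by blast
  then show "activated rt eta S w \<or> (\<exists>Q\<in>set R. Bq rt v eta S Q w)"
  proof (induction rule: reached.induct)
    case (root_frog j)
    then show ?case using reached.root_frog[of rt eta S j] assms(2)
      by (auto simp: eS_def activated_def)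
  next
    case (woken w' t i j)
    show ?case
    proof (cases "w' = v \<and> eta v \<le> i")
      case True
      define Q where "Q = rev R ! (i - eta v)"
      have ilt: "i - eta v < length R" using True woken.hyps(3) by auto
      have QR: "Q \<in> set R" unfolding Q_def using ilt by (metis length_rev nth_mem set_rev)
      have eq: "eS v eta S R w' i = Q" using True woken.hyps(3) by (auto simp: eS_def Q_def)
      obtain t0 where t0: "reached rt eta S v t0" using assms(1) unfolding activated_def by blast
      have "reached rt (eta(v := eta v + length [Q])) (eS v eta S [Q]) v t0"
        by (rule dom_old[OF t0 assms(2)])
      from reached.woken[OF this assms(2), of "eta v" j]
      have "reached rt (eta(v := eta v + 1)) (eS v eta S [Q]) (Q j) (t0 + j)"
        by (simp add: eS_def)
      then have "Bq rt v eta S Q (Q j)" unfolding Bq_def activated_def by blast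
      then show ?thesis using QR eq by auto
    next
      case False
      then have ilt: "i < eta w'" and eq: "eS v eta S R w' i = S w' i"
        using woken.hyps(3) by (auto simp: eS_def split: if_splits)
      show ?thesis using woken.IH
      proof
        assume "activated rt eta S w'"
        then obtain t1 where "reached rt eta S w' t1" unfolding activated_def by blast
        from reached.woken[OF this woken.hyps(2) ilt, of j] show ?thesis
          using eq unfolding activated_def by auto
      next
        assume "\<exists>Q\<in>set R. Bq rt v eta S Q w'"
        then obtain Q t1 where QR: "Q \<in> set R" and
          r: "reached rt (eta(v := eta v + 1)) (eS v eta S [Q]) w' t1"
          unfolding Bq_def activated_def by blast
        have ilt': "i < (eta(v := eta v + 1)) w'" using ilt by auto
        have e2: "eS v eta S [Q] w' i = S w' i" using ilt by (auto simp: eS_def)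
        from reached.woken[OF r woken.hyps(2) ilt', of j]
        have "Bq rt v eta S Q (S w' i j)" unfolding Bq_def activated_def
          unfolding e2 by blast
        then show ?thesis using QR eq by auto
      qed
    qed
  qed
next
  assume "activated rt eta S w \<or> (\<exists>Q\<in>set R. Bq rt v eta S Q w)"
  then show "activated rt (eta(v := eta v + length R)) (eS v eta S R) w"
  proof
    assume "activated rt eta S w"
    then show ?thesis unfolding activated_def using dom_old[OF _ assms(2)] by blast
  next
    assume "\<exists>Q\<in>set R. Bq rt v eta S Q w"
    then obtain Q t where QR: "Q \<in> set R" and
      r: "reached rt (eta(v := eta v + 1)) (eS v eta S [Q]) w t"
      unfolding Bq_def activated_def by blast
    obtain k where k: "k < length R" "rev R ! k = Q"
      using QR by (metis in_set_conv_nth length_rev set_rev)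
    have "reached rt (eta(v := eta v + length R)) (eS v eta S R) w t"
    proof (rule reached_dom[OF r])
      show "eS v eta S R rt 0 = eS v eta S [Q] rt 0" using assms(2) by (simp add: eS_def)
    next
      fix w' i assume w': "w' \<noteq> rt" "i < (eta(v := eta v + 1)) w'"
      show "\<exists>i'<(eta(v := eta v + length R)) w'. eS v eta S R w' i' = eS v eta S [Q] w' i"
      proof (cases "w' = v \<and> i = eta v")
        case True
        then show ?thesis using k by (intro exI[of _ "eta v + k"]) (auto simp: eS_def)
      next
        case False
        then have "i < eta w'" using w' by (auto split: if_splits)
        then show ?thesis by (intro exI[of _ i]) (auto simp: eS_def)
      qed
    qed
    then show ?thesis unfolding activated_def by blast
  qed
qed




definition Fr :: "'v \<Rightarrow> ('v \<Rightarrow> nat) \<Rightarrow> ('v \<Rightarrow> bool) \<Rightarrow> ('v \<times> nat) set" where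
  "Fr rt eta X = {(w, i). w \<noteq> rt \<and> X w \<and> i < eta w}"

lemma rv_no:
  assumes "\<not> activated rt eta S v" "v \<noteq> rt"
  shows "root_visits rt (eta(v := eta v + length R), eS v eta S R) = root_visits rt (eta, S)"
proof -
  have sets: "active_frogs rt (eta(v := eta v + length R)) (eS v eta S R) = active_frogs rt eta S"
    unfolding active_frogs_def using act_no[OF assms] assms by (auto split: if_splits)
  show ?thesis unfolding root_visits_def split sets
  proof (rule infsum_cong)
    fix x assume "x \<in> active_frogs rt eta S"
    then show "(case x of (v', i) \<Rightarrow> visit_count rt (eS v eta S R v' i)) =
               (case x of (v, i) \<Rightarrow> visit_count rt (S v i))"
      using assms unfolding active_frogs_def by (auto simp: eS_def)
  qed
qed

lemma rv_yes:
  assumes "activated rt eta S v" "v \<noteq> rt"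
  shows "root_visits rt (eta(v := eta v + length R), eS v eta S R) =
     visit_count rt (S rt 0) +
     infsum (\<lambda>(w, i). visit_count rt (S w i))
       (Fr rt eta (activated rt eta S) \<union> \<Union>((\<lambda>Q. Fr rt eta (Bq rt v eta S Q)) ` set R)) +
     sum_list (map (visit_count rt) R)"
proof -
  define G where "G = Fr rt eta (activated rt eta S) \<union> \<Union>((\<lambda>Q. Fr rt eta (Bq rt v eta S Q)) ` set R)"
  define N where "N = (\<lambda>k. (v, eta v + k)) ` {..<length R}"
  define f where "f = (\<lambda>(w, i). visit_count rt (eS v eta S R w i))"
  have actR: "activated rt (eta(v := eta v + length R)) (eS v eta S R) w \<longleftrightarrow>
     activated rt eta S w \<or> (\<exists>Q\<in>set R. Bq rt v eta S Q w)" for w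
    by (rule act_yes[OF assms])
  have sets: "active_frogs rt (eta(v := eta v + length R)) (eS v eta S R) = insert (rt, 0) (G \<union> N)"
  proof -
    have "(w, i) \<in> G \<union> N \<longleftrightarrow> w \<noteq> rt \<and> activated rt (eta(v := eta v + length R)) (eS v eta S R) w
           \<and> i < (eta(v := eta v + length R)) w" for w i
    proof (cases "w = v")
      case True
      show ?thesis
      proof
        assume "(w, i) \<in> G \<union> N" then show "w \<noteq> rt \<and> activated rt (eta(v := eta v + length R)) (eS v eta S R) w
           \<and> i < (eta(v := eta v + length R)) w"
          using True assms actR by (auto simp: G_def N_def Fr_def)
      next
        assume a: "w \<noteq> rt \<and> activated rt (eta(v := eta v + length R)) (eS v eta S R) w
           \<and> i < (eta(v := eta v + length R)) w"
        show "(w, i) \<in> G \<union> N"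
        proof (cases "i < eta v")
          case True then show ?thesis using \<open>w = v\<close> assms by (auto simp: G_def Fr_def)
        next
          case False
          then have "i - eta v < length R" "i = eta v + (i - eta v)" using a \<open>w = v\<close> by auto
          then show ?thesis unfolding N_def using \<open>w = v\<close> by blast
        qed
      qed
    next
      case False
      then show ?thesis using actR by (auto simp: G_def N_def Fr_def)
    qed
    then show ?thesis unfolding active_frogs_def by auto
  qed
  have rt_notin: "(rt, 0) \<notin> G \<union> N" using assms(2) by (auto simp: G_def N_def Fr_def)
  have disj: "G \<inter> N = {}" by (auto simp: G_def N_def Fr_def)
  have "root_visits rt (eta(v := eta v + length R), eS v eta S R) = infsum f (insert (rt, 0) (G \<union> N))"
    by (simp add: root_visits_def sets f_def)
  also have "\<dots> = f (rt, 0) + (infsum f G + infsum f N)"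
    using infsum_insert[OF ens rt_notin] ens_Un[OF disj] by simp
  also have "f (rt, 0) = visit_count rt (S rt 0)" using assms(2) by (simp add: f_def eS_def)
  also have "infsum f G = infsum (\<lambda>(w, i). visit_count rt (S w i)) G"
    by (rule infsum_cong) (auto simp: f_def G_def Fr_def eS_def)
  also have "infsum f N = sum f N" by (simp add: N_def)
  also have "\<dots> = (\<Sum>k<length R. f (v, eta v + k))"
    unfolding N_def by (subst sum.reindex) (auto simp: inj_on_def)
  also have "\<dots> = (\<Sum>k<length R. visit_count rt (rev R ! k))"
    by (rule sum.cong) (auto simp: f_def eS_def)
  also have "\<dots> = sum_list (map (visit_count rt) (rev R))"
    by (simp add: sum_list_sum_nth atLeast0LessThan)
  also have "\<dots> = sum_list (map (visit_count rt) R)"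
    by (simp add: rev_map[symmetric] sum_list_rev)
  finally show ?thesis by (simp add: G_def add.assoc fun_upd_def)
qed




lemma sl_fin: "sum_list (map (c :: 'a \<Rightarrow> ennreal) R) \<noteq> \<infinity> \<Longrightarrow> Q \<in> set R \<Longrightarrow> c Q \<noteq> \<infinity>"
  by (induction R) (auto simp: top_unique)

lemma sl_real: "(\<forall>Q\<in>set R. (c :: 'a \<Rightarrow> ennreal) Q \<noteq> \<infinity>) \<Longrightarrow>
   enn2real (sum_list (map c R)) = sum_list (map (\<lambda>Q. enn2real (c Q)) R)"
proof (induction R)
  case Nil then show ?case by simp
next
  case (Cons Q R)
  have "sum_list (map c R) \<noteq> \<infinity>"
  proof -
    have "\<forall>Q\<in>set R. c Q < \<infinity>" using Cons.prems by (auto simp: top.not_eq_extremum)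
    then have "sum_list (map c R) < \<infinity>" by (induction R) auto
    then show ?thesis by simp
  qed
  then show ?case using Cons by (simp add: enn2real_plus top.not_eq_extremum)
qed

lemma sign_all:
  fixes rt :: 'v
  assumes "m \<ge> 1"
  shows "sign_cond rt (root_visits rt) m"
  unfolding sign_cond_def
proof (intro allI impI)
  fix x :: "'v frog_model" and Ps
  assume len: "length Ps = m" and cs: "common_start rt Ps" and af: "all_finite Ps (root_visits rt) x"
  obtain v where v: "v \<noteq> rt" "\<forall>P\<in>set Ps. P 0 = v" using cs unfolding common_start_def by blast
  obtain eta S where x: "x = (eta, S)" by (cases x)
  have Psne: "Ps \<noteq> []" using len assms by auto
  define g where "g = (\<lambda>y. enn2real (root_visits rt y))"
  have ad: "addl R x = (eta(v := eta v + length R), eS v eta S R)" if "set R \<subseteq> set Ps" for R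
    unfolding x by (rule addl_eq) (use that v in auto)
  have it: "iter_delta Ps g x = iterF Ps (\<lambda>R. g (addl R x))" by (rule iter_delta_iterF)
  show "(-1) ^ m * iter_delta Ps (\<lambda>y. enn2real (root_visits rt y)) x \<le> 0"
  proof (cases "activated rt eta S v")
    case False
    have "iterF Ps (\<lambda>R. g (addl R x)) = iterF Ps (\<lambda>R. g x)"
      by (rule iterF_cong) (simp add: ad rv_no[OF False v(1)] g_def, simp add: x)
    then show ?thesis using it iterF_const[OF Psne] by (simp add: g_def)
  next
    case True
    define c where "c = visit_count rt"
    define \<omega> where "\<omega> = (\<lambda>(w, i). c (S w i))"
    define A where "A = Fr rt eta (activated rt eta S)"
    define FB where "FB = (\<lambda>Q. Fr rt eta (Bq rt v eta S Q))"
    define E where "E = A \<union> \<Union>(FB ` set Ps)"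
    have form: "root_visits rt (addl R x) = c (S rt 0) + infsum \<omega> (A \<union> \<Union>(FB ` set R)) + sum_list (map c R)"
      if "set R \<subseteq> set Ps" for R
      unfolding ad[OF that] rv_yes[OF True v(1)] c_def \<omega>_def A_def FB_def by simp
    have "root_visits rt (addl (rev Ps) x) \<noteq> \<infinity>" using all_finite_full[OF af] .
    then have ff: "c (S rt 0) + infsum \<omega> E + sum_list (map c Ps) \<noteq> \<infinity>"
      using form[of "rev Ps"] by (simp add: E_def rev_map[symmetric] sum_list_rev)
    then have fE: "infsum \<omega> E \<noteq> \<infinity>" and f0: "c (S rt 0) \<noteq> \<infinity>" and fs: "sum_list (map c Ps) \<noteq> \<infinity>"
      by (auto simp: top_unique)
    have fQ: "\<forall>Q\<in>set R. c Q \<noteq> \<infinity>" if "set R \<subseteq> set Ps" for R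
      using sl_fin[OF fs] that by auto
    have fsub: "infsum \<omega> X \<noteq> \<infinity>" if "X \<subseteq> E" for X
      using ens_mono[OF that, of \<omega>] fE by (auto simp: top_unique)
    have gR: "g (addl R x) = enn2real (c (S rt 0)) + enn2real (infsum \<omega> ((A \<union> \<Union>(FB ` set R)) \<inter> E))
        + sum_list (map (\<lambda>Q. enn2real (c Q)) R)" if "set R \<subseteq> set Ps" for R
    proof -
      have sub: "(A \<union> \<Union>(FB ` set R)) \<inter> E = A \<union> \<Union>(FB ` set R)" using that by (auto simp: E_def)
      have "infsum \<omega> (A \<union> \<Union>(FB ` set R)) \<noteq> \<infinity>" using fsub[of "A \<union> \<Union>(FB ` set R)"] sub by auto
      moreover have "sum_list (map c R) \<noteq> \<infinity>"
      proof -
        have "\<forall>Q\<in>set R. c Q < \<infinity>" using fQ[OF that] by (auto simp: top.not_eq_extremum)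
        then have "sum_list (map c R) < \<infinity>" by (induction R) auto
        then show ?thesis by simp
      qed
      ultimately show ?thesis unfolding g_def form[OF that] sub sl_real[OF fQ[OF that], symmetric]
        using f0 by (simp add: enn2real_plus top.not_eq_extremum)
    qed
    have "iterF Ps (\<lambda>R. g (addl R x)) = iterF Ps (\<lambda>R. (enn2real (c (S rt 0)) + enn2real (infsum \<omega> ((A \<union> \<Union>(FB ` set R)) \<inter> E)))
        + sum_list (map (\<lambda>Q. enn2real (c Q)) R))"
      by (rule iterF_cong) (simp add: gR)
    also have "\<dots> = iterF Ps (\<lambda>R. enn2real (infsum \<omega> ((A \<union> \<Union>(FB ` set R)) \<inter> E)))
        + iterF Ps (\<lambda>R. sum_list (map (\<lambda>Q. enn2real (c Q)) R))"
      by (simp add: iterF_add iterF_const[OF Psne])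
    finally have eq: "iter_delta Ps g x = \<dots>" using it by simp
    have c1: "(-1) ^ length Ps * iterF Ps (\<lambda>R. enn2real (infsum \<omega> ((A \<union> \<Union>(FB ` set R)) \<inter> E))) \<le> 0"
      by (rule cover[OF fE Psne])
    have c2: "(-1) ^ length Ps * iterF Ps (\<lambda>R. sum_list (map (\<lambda>Q. enn2real (c Q)) R)) \<le> 0"
      by (rule iterF_sumlist[OF _ Psne]) simp
    show ?thesis using c1 c2 eq len by (simp add: g_def distrib_left)
  qed
qed




lemma addl0: "(eta, S) = (eta(v := eta v + length ([]::(nat\<Rightarrow>'v) list)), eS v eta S [])"
  using addl_eq[of "[]" v eta S] by simp

lemma cond_ii: "inf_cond_ii rt (root_visits rt)"
  unfolding inf_cond_ii_def
proof (intro allI impI)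
  fix x :: "'a frog_model" and P :: "nat \<Rightarrow> 'a"
  assume P: "P 0 \<noteq> rt" and inf: "root_visits rt x = \<infinity>"
  obtain eta S where x: "x = (eta, S)" by (cases x)
  define v where "v = P 0"
  have a1: "add_frog P x = (eta(v := eta v + length [P]), eS v eta S [P])"
    using addl_eq[of "[P]" v eta S] x by (simp add: v_def)
  show "root_visits rt (add_frog P x) = \<infinity>"
  proof (cases "activated rt eta S v")
    case False
    then show ?thesis using rv_no[OF False, of "[P]"] P inf x a1 by (simp add: v_def)
  next
    case True
    have vr: "v \<noteq> rt" using P v_def by simp
    have x0: "(eta(v := eta v + length ([]::(nat\<Rightarrow>'a) list)), eS v eta S []) = x"
      using addl_eq[of "[]" v eta S] x by simp
    have l: "root_visits rt x = visit_count rt (S rt 0) +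
     infsum (\<lambda>(w, i). visit_count rt (S w i)) (Fr rt eta (activated rt eta S) \<union> \<Union>((\<lambda>Q. Fr rt eta (Bq rt v eta S Q)) ` set [])) +
     sum_list (map (visit_count rt) [])"
      using rv_yes[OF True vr, of "[]"] x0 by simp
    have r: "root_visits rt (add_frog P x) = visit_count rt (S rt 0) +
     infsum (\<lambda>(w, i). visit_count rt (S w i)) (Fr rt eta (activated rt eta S) \<union> \<Union>((\<lambda>Q. Fr rt eta (Bq rt v eta S Q)) ` set [P])) +
     sum_list (map (visit_count rt) [P])"
      using rv_yes[OF True vr, of "[P]"] a1 by simp
    have "root_visits rt x \<le> root_visits rt (add_frog P x)"
      unfolding l r apply simp apply (rule disjI2) apply (rule add_increasing2)
       apply simp apply (rule ens_mono) by auto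
    then show ?thesis using inf by (simp add: top_unique)
  qed
qed

lemma cond_iii: "inf_cond_iii rt (root_visits rt)"
  unfolding inf_cond_iii_def
proof (intro allI impI)
  fix x :: "'a frog_model" and P1 P2 :: "nat \<Rightarrow> 'a"
  assume P: "P1 0 \<noteq> rt" "P2 0 = P1 0" and inf: "root_visits rt (add_frog P1 (add_frog P2 x)) = \<infinity>"
  obtain eta S where x: "x = (eta, S)" by (cases x)
  define v where "v = P1 0"
  have vr: "v \<noteq> rt" using P v_def by simp
  have a1: "add_frog P1 x = (eta(v := eta v + length [P1]), eS v eta S [P1])"
    using addl_eq[of "[P1]" v eta S] x by (simp add: v_def)
  have a2: "add_frog P2 x = (eta(v := eta v + length [P2]), eS v eta S [P2])"
    using addl_eq[of "[P2]" v eta S] x P by (simp add: v_def)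
  have a12: "add_frog P1 (add_frog P2 x) = (eta(v := eta v + length [P1, P2]), eS v eta S [P1, P2])"
    using addl_eq[of "[P1, P2]" v eta S] x P by (simp add: v_def)
  show "root_visits rt (add_frog P1 x) = \<infinity> \<or> root_visits rt (add_frog P2 x) = \<infinity>"
  proof (cases "activated rt eta S v")
    case False
    then show ?thesis using rv_no[OF False vr, of "[P1]"] rv_no[OF False vr, of "[P1, P2]"] inf a1 a12 by simp
  next
    case True
    define c where "c = visit_count rt"
    define \<omega> where "\<omega> = (\<lambda>(w, i). c (S w i))"
    define A where "A = Fr rt eta (activated rt eta S)"
    define FB where "FB = (\<lambda>Q. Fr rt eta (Bq rt v eta S Q))"
    have r1: "root_visits rt (add_frog P1 x) = c (S rt 0) + infsum \<omega> (A \<union> FB P1) + c P1"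
      unfolding a1 rv_yes[OF True vr] c_def \<omega>_def A_def FB_def by simp
    have r2: "root_visits rt (add_frog P2 x) = c (S rt 0) + infsum \<omega> (A \<union> FB P2) + c P2"
      unfolding a2 rv_yes[OF True vr] c_def \<omega>_def A_def FB_def by simp
    have r12: "root_visits rt (add_frog P1 (add_frog P2 x)) = c (S rt 0) + infsum \<omega> ((A \<union> FB P1) \<union> (A \<union> FB P2)) + (c P1 + c P2)"
      unfolding a12 rv_yes[OF True vr] c_def \<omega>_def A_def FB_def by (simp add: Un_ac)
    have "root_visits rt (add_frog P1 (add_frog P2 x)) \<le> root_visits rt (add_frog P1 x) + root_visits rt (add_frog P2 x)"
    proof -
      have "infsum \<omega> ((A \<union> FB P1) \<union> (A \<union> FB P2)) \<le> infsum \<omega> (A \<union> FB P1) + infsum \<omega> (A \<union> FB P2)"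
        by (rule ens_sub)
      then have "c (S rt 0) + infsum \<omega> ((A \<union> FB P1) \<union> (A \<union> FB P2)) + (c P1 + c P2)
         \<le> c (S rt 0) + (infsum \<omega> (A \<union> FB P1) + infsum \<omega> (A \<union> FB P2)) + (c P1 + c P2)"
        by (intro add_mono) auto
      also have "\<dots> \<le> (c (S rt 0) + infsum \<omega> (A \<union> FB P1) + c P1) + (c (S rt 0) + infsum \<omega> (A \<union> FB P2) + c P2)"
        by (simp add: algebra_simps add_increasing)
      finally show ?thesis unfolding r1 r2 r12 .
    qed
    then show ?thesis using inf by (auto simp: top_unique)
  qed
qed




lemma reached_ev:
  assumes conv: "\<And>v. (\<lambda>k. etas k v) \<longlonglongrightarrow> (eta v :: nat)"
    and "reached rt eta S w t"
  shows "eventually (\<lambda>k. reached rt (etas k) S w t) sequentially"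
  using assms(2)
proof (induction rule: reached.induct)
  case (root_frog j)
  show ?case by (rule always_eventually) (simp add: reached.root_frog)
next
  case (woken v t i j)
  have "eventually (\<lambda>k. i < etas k v) sequentially"
    using order_tendstoD(1)[OF conv woken.hyps(3)] .
  with woken.IH show ?case
    by eventually_elim (rule reached.woken[OF _ woken.hyps(2)])
qed

lemma rv_mono_eta:
  assumes "\<And>v. eta v \<le> eta' v"
  shows "root_visits rt (eta, S) \<le> root_visits rt (eta', S)"
proof -
  have "active_frogs rt eta S \<subseteq> active_frogs rt eta' S"
  proof
    fix p assume p: "p \<in> active_frogs rt eta S"
    have "activated rt eta' S w" if aw: "activated rt eta S w" for w
    proof -
      obtain t where "reached rt eta S w t" using aw unfolding activated_def by blast
      then have "reached rt eta' S w t"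
      proof (rule reached_dom)
        fix w i assume "i < eta w"
        then show "\<exists>i'<eta' w. S w i' = S w i" using assms[of w] by (intro exI[of _ i]) auto
      qed simp
      then show ?thesis unfolding activated_def by blast
    qed
    then show "p \<in> active_frogs rt eta' S" using p assms unfolding active_frogs_def
      by (auto intro: less_le_trans)
  qed
  then show ?thesis unfolding root_visits_def by (simp add: ens_mono)
qed

lemma cont: "continuous_statistic (root_visits rt)"
  unfolding continuous_statistic_def
proof (intro allI impI)
  fix eta :: "'a \<Rightarrow> nat" and S :: "'a paths" and etas :: "nat \<Rightarrow> 'a \<Rightarrow> nat"
  assume "\<forall>v. incseq (\<lambda>k. etas k v) \<and> (\<lambda>k. etas k v) \<longlonglongrightarrow> eta v"
  then have inc: "\<And>v. incseq (\<lambda>k. etas k v)" and conv: "\<And>v. (\<lambda>k. etas k v) \<longlonglongrightarrow> eta v" by auto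
  have incr: "incseq (\<lambda>k. root_visits rt (etas k, S))"
  proof (rule incseq_def[THEN iffD2], intro allI impI)
    fix m n :: nat assume "m \<le> n"
    show "root_visits rt (etas m, S) \<le> root_visits rt (etas n, S)"
      by (rule rv_mono_eta, rule incseqD[OF inc \<open>m \<le> n\<close>])
  qed
  have le: "root_visits rt (etas k, S) \<le> root_visits rt (eta, S)" for k
    by (rule rv_mono_eta) (rule incseq_le[OF inc conv])
  define f where "f = (\<lambda>(v, i). visit_count rt (S v i))"
  have "root_visits rt (eta, S) = infsum f (active_frogs rt eta S)"
    by (simp add: root_visits_def f_def)
  also have "\<dots> = (SUP F\<in>{F. finite F \<and> F \<subseteq> active_frogs rt eta S}. sum f F)"
    by (rule nonneg_infsum_complete) simp
  also have "\<dots> \<le> (SUP k. root_visits rt (etas k, S))"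
  proof (rule SUP_least)
    fix F assume "F \<in> {F. finite F \<and> F \<subseteq> active_frogs rt eta S}"
    then have F: "finite F" "F \<subseteq> active_frogs rt eta S" by auto
    have "\<forall>p\<in>F. eventually (\<lambda>k. p \<in> active_frogs rt (etas k) S) sequentially"
    proof
      fix p assume "p \<in> F"
      then have "p \<in> active_frogs rt eta S" using F by auto
      then consider "p = (rt, 0)" | w i t where "p = (w, i)" "w \<noteq> rt" "reached rt eta S w t" "i < eta w"
        unfolding active_frogs_def activated_def by blast
      then show "eventually (\<lambda>k. p \<in> active_frogs rt (etas k) S) sequentially"
      proof cases
        case 1 then show ?thesis by (simp add: active_frogs_def)
      next
        case 2
        have "eventually (\<lambda>k. i < etas k w) sequentially"
          using order_tendstoD(1)[OF conv 2(4)] .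
        moreover have "eventually (\<lambda>k. reached rt (etas k) S w t) sequentially"
          by (rule reached_ev[OF conv 2(3)])
        ultimately show ?thesis
          by eventually_elim (unfold active_frogs_def activated_def 2(1), use 2(2) in blast)
      qed
    qed
    then have "eventually (\<lambda>k. \<forall>p\<in>F. p \<in> active_frogs rt (etas k) S) sequentially"
      by (rule eventually_ball_finite[OF F(1)])
    then obtain N where "\<forall>n\<ge>N. \<forall>p\<in>F. p \<in> active_frogs rt (etas n) S"
      unfolding eventually_sequentially by blast
    then have k: "F \<subseteq> active_frogs rt (etas N) S" by (simp add: subset_iff)
    have "sum f F = infsum f F" using F(1) by simp
    also have "\<dots> \<le> infsum f (active_frogs rt (etas N) S)" by (rule ens_mono[OF k])
    also have "\<dots> = root_visits rt (etas N, S)" by (simp add: root_visits_def f_def)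
    also have "\<dots> \<le> (SUP k. root_visits rt (etas k, S))" by (rule SUP_upper) simp
    finally show "sum f F \<le> (SUP k. root_visits rt (etas k, S))" .
  qed
  finally have "root_visits rt (eta, S) \<le> (SUP k. root_visits rt (etas k, S))" .
  moreover have "(SUP k. root_visits rt (etas k, S)) \<le> root_visits rt (eta, S)"
    by (rule SUP_least) (rule le)
  ultimately have eq: "(SUP k. root_visits rt (etas k, S)) = root_visits rt (eta, S)" by simp
  show "incseq (\<lambda>k. root_visits rt (etas k, S)) \<and> (\<lambda>k. root_visits rt (etas k, S)) \<longlonglongrightarrow> root_visits rt (eta, S)"
    using incr LIMSEQ_SUP[OF incr] eq by simp
qed


theorem proposition4:
  fixes rt :: "'v::countable"
  shows "icv_statistic rt (root_visits rt) \<and> continuous_statistic (root_visits rt) \<and>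
         pgf_statistic rt (root_visits rt)"
proof -
  have "icv_statistic rt (root_visits rt)"
    unfolding icv_statistic_def using sign_all[of 1 rt] sign_all[of 2 rt] cond_ii[of rt] cond_iii[of rt] by simp
  moreover have "pgf_statistic rt (root_visits rt)"
    unfolding pgf_statistic_def using sign_all[of _ rt] cond_ii[of rt] cond_iii[of rt] by blast
  moreover have "continuous_statistic (root_visits rt)" by (rule cont)
  ultimately show ?thesis by blast
qed

end
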